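(* Let $M,N\in\Lambda^{001}$ with $M\longrightarrow_\beta^\infty N$. Then there exist terms $M_0,M_1,M_2,\ldots\in\Lambda^{001}$ such that $M_0=M$ and, for every $d\in\mathbf N$, $$M_0\longrightarrow_{\beta\ge 0}^* M_1\longrightarrow_{\beta\ge1}^* M_2\longrightarrow_{\beta\ge2}^*\cdots\longrightarrow_{\beta\ge d-1}^* M_d \longrightarrow_{\beta\ge d}^\infty N.$$
   Context: Fix a set $\mathcal V$ of variables. A 001-infinitary λ-term is a possibly infinite tree built from variables $x\in\mathcal V$, abstractions $\lambda x.M$ and applications $(M)N$ ($N$ the argument), such that every infinite branch enters infinitely often the argument position of an application node; $\Lambda^{001}$ is the set of such terms, up to α-equivalence, with fresh variables always available. $M[N/x]$ denotes capture-avoiding substitution. One-step β-reduction $\longrightarrow_\beta$ is the contextual closure (finite derivations) of $(\lambda x.M)N\longrightarrow_\beta M[N/x]$; $\longrightarrow_\beta^*$ is its reflexive-transitive closure. The infinitary reduction $\longrightarrow_\beta^\infty$ is defined by the rules below, where derivations may be infinite provided every infinite branch passes infinitely often through the third premise of (@): (var) $M\longrightarrow_\beta^* x\Rightarrow M\longrightarrow_\beta^\infty x$; (λ) $M\longrightarrow_\beta^*\lambda x.P$ and $P\longrightarrow_\beta^\infty P'$ $\Rightarrow M\longrightarrow_\beta^\infty\lambda x.P'$; (@) $M\longrightarrow_\beta^*(P)Q$, $P\longrightarrow_\beta^\infty P'$, $Q\longrightarrow_\beta^\infty Q'$ $\Rightarrow M\longrightarrow_\beta^\infty(P')Q'$.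 Min-depth reduction: $\longrightarrow_{\beta\ge0}$ is $\longrightarrow_\beta$; for $d\ge0$, $\longrightarrow_{\beta\ge d+1}$ is defined inductively by: $M\longrightarrow_{\beta\ge d+1}N\Rightarrow\lambda x.M\longrightarrow_{\beta\ge d+1}\lambda x.N$; $M\longrightarrow_{\beta\ge d+1}N\Rightarrow(M)P\longrightarrow_{\beta\ge d+1}(N)P$; $M\longrightarrow_{\beta\ge d}N\Rightarrow(P)M\longrightarrow_{\beta\ge d+1}(P)N$ (i.e. contraction of a redex whose path from the root crosses at least $d+1$ argument positions). $\longrightarrow_{\beta\ge d}^*$ is its reflexive-transitive closure. Min-depth infinitary reduction: $\longrightarrow_{\beta\ge0}^\infty$ is $\longrightarrow_\beta^\infty$; for $d\ge1$, $\longrightarrow_{\beta\ge d}^\infty$ is defined inductively (finite derivations) by: $x\longrightarrow_{\beta\ge d}^\infty x$; $M\longrightarrow_{\beta\ge d}^\infty M'\Rightarrow\lambda x.M\longrightarrow_{\beta\ge d}^\infty\lambda x.M'$; ($M\longrightarrow_{\beta\ge d}^\infty M'$ and $N\longrightarrow_{\beta\ge d-1}^\infty N'$) $\Rightarrow (M)N\longrightarrow_{\beta\ge d}^\infty(M')N'$. *)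

theory Defs
  imports Main
begin

text \<open>Possibly infinite lambda-terms, represented with de Bruijn indices, so that
terms are identified up to alpha-equivalence. A free variable is an index that
is not bound by an enclosing abstraction.\<close>

codatatype iterm = Var nat | Lam iterm | App iterm iterm

inductive fin_spine :: "iterm \<Rightarrow> bool" where
  "fin_spine (Var n)"
| "fin_spine s \<Longrightarrow> fin_spine (Lam s)"
| "fin_spine s \<Longrightarrow> fin_spine (App s u)"

inductive reach :: "iterm \<Rightarrow> iterm \<Rightarrow> bool" where
  "reach t t"
| "reach s u \<Longrightarrow> reach (Lam s) u"
| "reach s u \<Longrightarrow> reach (App s v) u"
| "reach v u \<Longrightarrow> reach (App s v) u"

text \<open>001-terms: every infinite branch enters an argument position infinitely
often, i.e. no subterm admits an infinite branch avoiding argument positions.\<close>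

definition is001 :: "iterm \<Rightarrow> bool" where
  "is001 t \<longleftrightarrow> (\<forall>s. reach t s \<longrightarrow> fin_spine s)"

primcorec shift :: "nat \<Rightarrow> iterm \<Rightarrow> iterm" where
  "shift c t = (case t of
      Var n \<Rightarrow> Var (if n < c then n else Suc n)
    | Lam s \<Rightarrow> Lam (shift (Suc c) s)
    | App s v \<Rightarrow> App (shift c s) (shift c v))"

primcorec subst :: "nat \<Rightarrow> iterm \<Rightarrow> iterm \<Rightarrow> iterm" where
  "subst k u t = (case t of
      Var n \<Rightarrow> (if n = k then
                   (case u of Var m \<Rightarrow> Var m | Lam a \<Rightarrow> Lam a | App a b \<Rightarrow> App a b)
                 else Var (if k < n then n - 1 else n))
    | Lam s \<Rightarrow> Lam (subst (Suc k) (shift 0 u) s)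
    | App s v \<Rightarrow> App (subst k u s) (subst k u v))"

definition inst :: "iterm \<Rightarrow> iterm \<Rightarrow> iterm" where
  "inst s u = subst 0 u s"

inductive beta :: "iterm \<Rightarrow> iterm \<Rightarrow> bool" where
  redex: "beta (App (Lam s) u) (inst s u)"
| lam: "beta M N \<Longrightarrow> beta (Lam M) (Lam N)"
| appL: "beta M N \<Longrightarrow> beta (App M P) (App N P)"
| appR: "beta M N \<Longrightarrow> beta (App P M) (App P N)"

abbreviation beta_star :: "iterm \<Rightarrow> iterm \<Rightarrow> bool" where
  "beta_star \<equiv> beta\<^sup>*\<^sup>*"

inductive beta_ge :: "nat \<Rightarrow> iterm \<Rightarrow> iterm \<Rightarrow> bool" where
  zero: "beta M N \<Longrightarrow> beta_ge 0 M N"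
| lam: "beta_ge (Suc d) M N \<Longrightarrow> beta_ge (Suc d) (Lam M) (Lam N)"
| appL: "beta_ge (Suc d) M N \<Longrightarrow> beta_ge (Suc d) (App M P) (App N P)"
| appR: "beta_ge d M N \<Longrightarrow> beta_ge (Suc d) (App P M) (App P N)"

text \<open>Inner (inductive) layer of the mixed inductive/coinductive definition:
the parameter \<open>X\<close> is used only at the argument premise of the application rule.\<close>

inductive binf_step :: "(iterm \<Rightarrow> iterm \<Rightarrow> bool) \<Rightarrow> iterm \<Rightarrow> iterm \<Rightarrow> bool"
  for X :: "iterm \<Rightarrow> iterm \<Rightarrow> bool" where
  var: "beta_star M (Var x) \<Longrightarrow> binf_step X M (Var x)"
| lam: "beta_star M (Lam P) \<Longrightarrow> binf_step X P P' \<Longrightarrow> binf_step X M (Lam P')"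
| app: "beta_star M (App P Q) \<Longrightarrow> binf_step X P P' \<Longrightarrow> X Q Q'
          \<Longrightarrow> binf_step X M (App P' Q')"

text \<open>Derivations may be infinite as long as every infinite branch passes
infinitely often through the argument premise: greatest fixed point of the
least fixed point.\<close>

definition binf :: "iterm \<Rightarrow> iterm \<Rightarrow> bool" where
  "binf = gfp binf_step"

inductive binf_ge :: "nat \<Rightarrow> iterm \<Rightarrow> iterm \<Rightarrow> bool" where
  zero: "binf M N \<Longrightarrow> binf_ge 0 M N"
| var: "binf_ge (Suc d) (Var x) (Var x)"
| lam: "binf_ge (Suc d) M M' \<Longrightarrow> binf_ge (Suc d) (Lam M) (Lam M')"
| app: "binf_ge (Suc d) M M' \<Longrightarrow> binf_ge d N N' \<Longrightarrow> binf_ge (Suc d) (App M N) (App M' N')"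

end

theory Submission
  imports Defs
begin

lemma shift_Var[simp]: "shift c (Var n) = Var (if n < c then n else Suc n)"
  by (subst shift.code) simp
lemma shift_Lam[simp]: "shift c (Lam s) = Lam (shift (Suc c) s)"
  by (subst shift.code) simp
lemma shift_App[simp]: "shift c (App s v) = App (shift c s) (shift c v)"
  by (subst shift.code) simp

lemma subst_Var: "subst k u (Var n) = (if n = k then u else Var (if k < n then n - 1 else n))"
  by (subst subst.code) (cases u; simp)
lemma subst_Lam[simp]: "subst k u (Lam s) = Lam (subst (Suc k) (shift 0 u) s)"
  by (subst subst.code) simp
lemma subst_App[simp]: "subst k u (App s v) = App (subst k u s) (subst k u v)"
  by (subst subst.code) simp

lemma is001_Var[simp]: "is001 (Var n)"
  unfolding is001_def
  by (auto elim: reach.cases intro: fin_spine.intros)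

lemma is001_Lam[simp]: "is001 (Lam N) \<longleftrightarrow> is001 N"
  unfolding is001_def
proof safe
  fix s assume "\<forall>s. reach (Lam N) s \<longrightarrow> fin_spine s" "reach N s"
  then show "fin_spine s" by (auto intro: reach.intros)
next
  fix s assume a: "\<forall>s. reach N s \<longrightarrow> fin_spine s" "reach (Lam N) s"
  from a(2) show "fin_spine s"
    by cases (use a(1) in \<open>auto intro: reach.intros fin_spine.intros\<close>)
qed

lemma is001_App[simp]: "is001 (App a b) \<longleftrightarrow> is001 a \<and> is001 b"
  unfolding is001_def
proof safe
  fix s assume "\<forall>s. reach (App a b) s \<longrightarrow> fin_spine s" "reach a s"
  then show "fin_spine s" by (auto intro: reach.intros)
next
  fix s assume "\<forall>s. reach (App a b) s \<longrightarrow> fin_spine s" "reach b s"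
  then show "fin_spine s" by (auto intro: reach.intros)
next
  fix s assume a: "\<forall>s. reach a s \<longrightarrow> fin_spine s" "\<forall>s. reach b s \<longrightarrow> fin_spine s"
    "reach (App a b) s"
  from a(3) show "fin_spine s"
    by cases (use a(1,2) in \<open>auto intro: reach.intros fin_spine.intros\<close>)
qed

lemma fin_spine_shift: "fin_spine t \<Longrightarrow> fin_spine (shift c t)"
  by (induction t arbitrary: c rule: fin_spine.induct) (auto intro: fin_spine.intros)

lemma reach_shift: "reach (shift c t) r \<Longrightarrow> \<exists>c' t'. reach t t' \<and> r = shift c' t'"
proof (induction "shift c t" r arbitrary: c t rule: reach.induct)
  case 1 then show ?case by (auto intro: reach.intros)
next
  case (2 s u)
  then show ?case by (cases t) (fastforce intro: reach.intros)+
next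
  case (3 s u v)
  then show ?case by (cases t) (fastforce intro: reach.intros)+
next
  case (4 v u s)
  then show ?case by (cases t) (fastforce intro: reach.intros)+
qed

lemma is001_shift: "is001 t \<Longrightarrow> is001 (shift c t)"
  unfolding is001_def using reach_shift fin_spine_shift by blast

lemma fin_spine_subst: "fin_spine t \<Longrightarrow> is001 u \<Longrightarrow> fin_spine (subst k u t)"
proof (induction t arbitrary: k u rule: fin_spine.induct)
  case (1 n)
  then show ?case
    by (auto simp: subst_Var is001_def intro: fin_spine.intros reach.intros)
next
  case (2 s) then show ?case by (auto intro: fin_spine.intros is001_shift)
next
  case (3 s v) then show ?case by (auto intro: fin_spine.intros)
qed

lemma reach_subst: "reach (subst k u t) r \<Longrightarrow> is001 u \<Longrightarrow>
   (\<exists>k' u' t'. reach t t' \<and> r = subst k' u' t' \<and> is001 u') \<or> (\<exists>u'. is001 u' \<and> reach u' r)"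
proof (induction "subst k u t" r arbitrary: k u t rule: reach.induct)
  case 1 then show ?case by (auto intro: reach.intros)
next
  case (2 s r)
  show ?case
  proof (cases t)
    case (Var n)
    with 2 show ?thesis
      by (auto simp: subst_Var split: if_splits intro: reach.intros)
  next
    case (Lam t0)
    with 2 have "s = subst (Suc k) (shift 0 u) t0" by simp
    with 2 Lam is001_shift show ?thesis by (blast intro: reach.intros)
  next
    case (App a b) with 2 show ?thesis by simp
  qed
next
  case (3 s r v)
  show ?case
  proof (cases t)
    case (Var n)
    with 3 show ?thesis
      by (auto simp: subst_Var split: if_splits intro: reach.intros)
  next
    case (Lam t0) with 3 show ?thesis by simp
  next
    case (App a b)
    with 3 have "s = subst k u a" by simp
    with 3 App show ?thesis by (blast intro: reach.intros)
  qed
next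
  case (4 v r s)
  show ?case
  proof (cases t)
    case (Var n)
    with 4 show ?thesis
      by (auto simp: subst_Var split: if_splits intro: reach.intros)
  next
    case (Lam t0) with 4 show ?thesis by simp
  next
    case (App a b)
    with 4 have "v = subst k u b" by simp
    with 4 App show ?thesis by (blast intro: reach.intros)
  qed
qed

lemma is001_subst: "is001 t \<Longrightarrow> is001 u \<Longrightarrow> is001 (subst k u t)"
proof -
  assume t: "is001 t" and u: "is001 u"
  show ?thesis unfolding is001_def
  proof safe
    fix r assume "reach (subst k u t) r"
    from reach_subst[OF this u] show "fin_spine r"
    proof
      assume "\<exists>k' u' t'. reach t t' \<and> r = subst k' u' t' \<and> is001 u'"
      then obtain k' u' t' where "reach t t'" "r = subst k' u' t'" "is001 u'" by blast
      with t show ?thesis using fin_spine_subst unfolding is001_def by blast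
    next
      assume "\<exists>u'. is001 u' \<and> reach u' r"
      then show ?thesis unfolding is001_def by blast
    qed
  qed
qed

lemma beta_is001: "beta M N \<Longrightarrow> is001 M \<Longrightarrow> is001 N"
  by (induction rule: beta.induct) (auto simp: inst_def intro: is001_subst)

lemma beta_ge_beta: "beta_ge d M N \<Longrightarrow> beta M N"
  by (induction rule: beta_ge.induct) (auto intro: beta.intros)

lemma star_is001: "(beta_ge d)\<^sup>*\<^sup>* M N \<Longrightarrow> is001 M \<Longrightarrow> is001 N"
  by (induction rule: rtranclp_induct) (auto dest: beta_ge_beta beta_is001)

lemma mono_binf_step: "mono binf_step"
proof (rule monoI, rule predicate2I)
  fix X Y :: "iterm \<Rightarrow> iterm \<Rightarrow> bool" and a b
  assume "X \<le> Y" "binf_step X a b"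
  from this(2) show "binf_step Y a b"
    by (induction rule: binf_step.induct)
       (use \<open>X \<le> Y\<close> in \<open>auto intro: binf_step.intros\<close>)
qed

lemma binf_unfold: "binf M N \<Longrightarrow> binf_step binf M N"
  using gfp_unfold[OF mono_binf_step] unfolding binf_def by simp

lemma beta_star_ge0: "beta_star a b \<Longrightarrow> (beta_ge 0)\<^sup>*\<^sup>* a b"
  by (induction rule: rtranclp_induct) (auto intro: beta_ge.zero rtranclp.rtrancl_into_rtrancl)

lemma lam_star: "(beta_ge (Suc d))\<^sup>*\<^sup>* M N \<Longrightarrow> (beta_ge (Suc d))\<^sup>*\<^sup>* (Lam M) (Lam N)"
  by (induction rule: rtranclp_induct) (auto intro: beta_ge.lam rtranclp.rtrancl_into_rtrancl)
lemma appL_star: "(beta_ge (Suc d))\<^sup>*\<^sup>* M N \<Longrightarrow> (beta_ge (Suc d))\<^sup>*\<^sup>* (App M P) (App N P)"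
  by (induction rule: rtranclp_induct) (auto intro: beta_ge.appL rtranclp.rtrancl_into_rtrancl)
lemma appR_star: "(beta_ge d)\<^sup>*\<^sup>* M N \<Longrightarrow> (beta_ge (Suc d))\<^sup>*\<^sup>* (App P M) (App P N)"
  by (induction rule: rtranclp_induct) (auto intro: beta_ge.appR rtranclp.rtrancl_into_rtrancl)

lemma lam_star0: "beta_star M N \<Longrightarrow> beta_star (Lam M) (Lam N)"
  by (induction rule: rtranclp_induct) (auto intro: beta.lam rtranclp.rtrancl_into_rtrancl)
lemma appL_star0: "beta_star M N \<Longrightarrow> beta_star (App M P) (App N P)"
  by (induction rule: rtranclp_induct) (auto intro: beta.appL rtranclp.rtrancl_into_rtrancl)

lemma step0: "binf_step binf P N \<Longrightarrow> \<exists>P'. beta_star P P' \<and> binf_ge (Suc 0) P' N"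
proof (induction rule: binf_step.induct)
  case (var M x) then show ?case by (auto intro: binf_ge.var)
next
  case (lam M P P')
  then obtain Q where "beta_star P Q" "binf_ge (Suc 0) Q P'" by blast
  with lam show ?case
    by (intro exI[of _ "Lam Q"]) (auto intro: binf_ge.lam lam_star0 rtranclp_trans)
next
  case (app M P Q P' Q')
  then obtain R where "beta_star P R" "binf_ge (Suc 0) R P'" by blast
  with app show ?case
    by (intro exI[of _ "App R Q"]) (auto intro: binf_ge.app binf_ge.zero appL_star0 rtranclp_trans)
qed

lemma step: "binf_ge d P N \<Longrightarrow> \<exists>P'. (beta_ge d)\<^sup>*\<^sup>* P P' \<and> binf_ge (Suc d) P' N"
proof (induction rule: binf_ge.induct)
  case (zero M N)
  from step0[OF binf_unfold[OF zero]] show ?case using beta_star_ge0 by blast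
next
  case (var d x) then show ?case by (auto intro: binf_ge.var)
next
  case (lam d M M')
  then obtain Q where "(beta_ge (Suc d))\<^sup>*\<^sup>* M Q" "binf_ge (Suc (Suc d)) Q M'" by blast
  then show ?case by (intro exI[of _ "Lam Q"]) (auto intro: binf_ge.lam lam_star)
next
  case (app d M M' N N')
  then obtain Q R where "(beta_ge (Suc d))\<^sup>*\<^sup>* M Q" "binf_ge (Suc (Suc d)) Q M'"
    "(beta_ge d)\<^sup>*\<^sup>* N R" "binf_ge (Suc d) R N'" by blast
  then show ?case
    by (intro exI[of _ "App Q R"])
       (auto intro: binf_ge.app appL_star appR_star rtranclp_trans)
qed

theorem mainTheorem6:
  assumes "is001 M" and "is001 N" and "binf M N"
  shows "\<exists>Ms :: nat \<Rightarrow> iterm. Ms 0 = M \<and> (\<forall>i. is001 (Ms i)) \<and>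
           (\<forall>d. (beta_ge d)\<^sup>*\<^sup>* (Ms d) (Ms (Suc d)) \<and> binf_ge d (Ms d) N)"
proof -
  define f where "f d P = (SOME P'. (beta_ge d)\<^sup>*\<^sup>* P P' \<and> binf_ge (Suc d) P' N)" for d P
  define Ms where "Ms = rec_nat M f"
  have M0: "Ms 0 = M" and MS: "\<And>d. Ms (Suc d) = f d (Ms d)" by (simp_all add: Ms_def)
  have fP: "binf_ge d P N \<Longrightarrow> (beta_ge d)\<^sup>*\<^sup>* P (f d P) \<and> binf_ge (Suc d) (f d P) N" for d P
    unfolding f_def by (rule someI_ex, rule step)
  have H: "binf_ge d (Ms d) N \<and> is001 (Ms d)" for d
  proof (induction d)
    case 0 then show ?case using assms by (simp add: M0 binf_ge.zero)
  next
    case (Suc d)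
    with fP[of d "Ms d"] show ?case by (auto simp: MS intro: star_is001)
  qed
  show ?thesis
    using H fP M0 MS by (intro exI[of _ Ms]) auto
qed

end
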